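(* For every $\mathcal{L}_{\mathrm{Int}}$-formula $A$: $A$ is a theorem of intuitionistic propositional logic if and only if $\mathsf{G}(Tr(A))$ is a theorem of the modal logic $\mathsf{K4}$.
   Context: $\mathcal{L}_{\mathrm{Int}}$-formulae are built from propositional letters and $\bot$ by $\wedge,\vee,\rightarrow$. $\mathsf{K4}$ is the normal modal logic $\mathsf{K}\oplus\Box p\rightarrow\Box\Box p$. Gödel's translation $\mathsf{G}$ from formulae with letters, $\bot,\top,\wedge,\vee,\rightarrow$ to modal formulae: $\mathsf{G}(p)=\Box p$, $\mathsf{G}(\bot)=\bot$, $\mathsf{G}(\top)=\top$, $\mathsf{G}(A\wedge B)=\mathsf{G}(A)\wedge\mathsf{G}(B)$, $\mathsf{G}(A\vee B)=\mathsf{G}(A)\vee\mathsf{G}(B)$, $\mathsf{G}(A\rightarrow B)=\Box(\mathsf{G}(A)\rightarrow\mathsf{G}(B))$. Weight: $w(p)=w(\bot)=2$, $w(A\wedge B)=w(A)(1+w(B))$, $w(A\vee B)=1+w(A)+w(B)$, $w(A\rightarrow B)=1+w(A)w(B)$. For $n\ge1$: $\top^1\rightarrow B:=\top\rightarrow B$, $\top^{n+1}\rightarrow B:=\top\rightarrow(\top^n\rightarrow B)$. Positive/negative translations: for $q$ a letter or $\bot$, $q^{+n}=\top^n\rightarrow q$, $q^{-n}=q$; for $\circ\in\{\wedge,\vee\}$, $(A\circ B)^{+n}=\top^n\rightarrow(A^{+n}\circ B^{+n})$, $(A\circ B)^{-n}=A^{-n}\circ B^{-n}$; $(A\rightarrow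 B)^{+n}=\top^n\rightarrow(A^{-n}\rightarrow B^{+n})$, $(A\rightarrow B)^{-n}=A^{+n}\rightarrow B^{-n}$. The translation is $Tr(A):=A^{+w(A)}$. *)

theory Defs
  imports Main
begin

datatype 'a fm = Atom 'a | FBot | FAnd "'a fm" "'a fm" | FOr "'a fm" "'a fm" | FImp "'a fm" "'a fm"

inductive IPC :: "'a fm \<Rightarrow> bool" where
  ax1: "IPC (FImp A (FImp B A))"
| ax2: "IPC (FImp (FImp A (FImp B C)) (FImp (FImp A B) (FImp A C)))"
| ax3: "IPC (FImp (FAnd A B) A)"
| ax4: "IPC (FImp (FAnd A B) B)"
| ax5: "IPC (FImp A (FImp B (FAnd A B)))"
| ax6: "IPC (FImp A (FOr A B))"
| ax7: "IPC (FImp B (FOr A B))"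
| ax8: "IPC (FImp (FImp A C) (FImp (FImp B C) (FImp (FOr A B) C)))"
| ax9: "IPC (FImp FBot A)"
| mp: "IPC (FImp A B) \<Longrightarrow> IPC A \<Longrightarrow> IPC B"

datatype 'a tfm = TAtom 'a | TBot | TTop | TAnd "'a tfm" "'a tfm" | TOr "'a tfm" "'a tfm"
  | TImp "'a tfm" "'a tfm"

datatype 'a mfm = MVar 'a | MBot | MTop | MAnd "'a mfm" "'a mfm" | MOr "'a mfm" "'a mfm"
  | MImp "'a mfm" "'a mfm" | MBox "'a mfm"

fun ceval :: "('a mfm \<Rightarrow> bool) \<Rightarrow> 'a mfm \<Rightarrow> bool" where
  "ceval v (MVar p) = v (MVar p)"
| "ceval v MBot = False"
| "ceval v MTop = True"
| "ceval v (MAnd A B) = (ceval v A \<and> ceval v B)"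
| "ceval v (MOr A B) = (ceval v A \<or> ceval v B)"
| "ceval v (MImp A B) = (ceval v A \<longrightarrow> ceval v B)"
| "ceval v (MBox A) = v (MBox A)"

definition tautology :: "'a mfm \<Rightarrow> bool" where
  "tautology A \<longleftrightarrow> (\<forall>v. ceval v A)"

text \<open>K4 = K + (Box p --> Box Box p): smallest set containing all tautologies,
  all instances of K and 4, closed under modus ponens and necessitation
  (closure under substitution is automatic since axioms are schemata).\<close>

inductive K4 :: "'a mfm \<Rightarrow> bool" where
  taut: "tautology A \<Longrightarrow> K4 A"
| axK: "K4 (MImp (MBox (MImp A B)) (MImp (MBox A) (MBox B)))"
| ax4: "K4 (MImp (MBox A) (MBox (MBox A)))"
| mp: "K4 (MImp A B) \<Longrightarrow> K4 A \<Longrightarrow> K4 B"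
| nec: "K4 A \<Longrightarrow> K4 (MBox A)"

fun G :: "'a tfm \<Rightarrow> 'a mfm" where
  "G (TAtom p) = MBox (MVar p)"
| "G TBot = MBot"
| "G TTop = MTop"
| "G (TAnd A B) = MAnd (G A) (G B)"
| "G (TOr A B) = MOr (G A) (G B)"
| "G (TImp A B) = MBox (MImp (G A) (G B))"

fun w :: "'a fm \<Rightarrow> nat" where
  "w (Atom p) = 2"
| "w FBot = 2"
| "w (FAnd A B) = w A * (1 + w B)"
| "w (FOr A B) = 1 + w A + w B"
| "w (FImp A B) = 1 + w A * w B"

text \<open>topimp n B is top^n --> B (only used for n >= 1; topimp 0 B = B).\<close>

fun topimp :: "nat \<Rightarrow> 'a tfm \<Rightarrow> 'a tfm" where
  "topimp 0 B = B"
| "topimp (Suc n) B = TImp TTop (topimp n B)"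

fun pos :: "nat \<Rightarrow> 'a fm \<Rightarrow> 'a tfm" and neg :: "nat \<Rightarrow> 'a fm \<Rightarrow> 'a tfm" where
  "pos n (Atom p) = topimp n (TAtom p)"
| "pos n FBot = topimp n TBot"
| "pos n (FAnd A B) = topimp n (TAnd (pos n A) (pos n B))"
| "pos n (FOr A B) = topimp n (TOr (pos n A) (pos n B))"
| "pos n (FImp A B) = topimp n (TImp (neg n A) (pos n B))"
| "neg n (Atom p) = TAtom p"
| "neg n FBot = TBot"
| "neg n (FAnd A B) = TAnd (neg n A) (neg n B)"
| "neg n (FOr A B) = TOr (neg n A) (neg n B)"
| "neg n (FImp A B) = TImp (pos n A) (neg n B)"

definition Tr :: "'a fm \<Rightarrow> 'a tfm" where
  "Tr A = pos (w A) A"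

end

theory Submission
  imports Defs
begin

section \<open>Generic Zorn extension\<close>

lemma zorn_ext:
  assumes fin: "\<And>\<Delta>. Q \<Delta> \<Longrightarrow> \<exists>\<Delta>0. finite \<Delta>0 \<and> \<Delta>0 \<subseteq> \<Delta> \<and> Q \<Delta>0"
  and mono: "\<And>\<Delta> \<Delta>'. Q \<Delta> \<Longrightarrow> \<Delta> \<subseteq> \<Delta>' \<Longrightarrow> Q \<Delta>'"
  and g: "\<not> Q \<Gamma>"
  shows "\<exists>\<Delta>. \<Gamma> \<subseteq> \<Delta> \<and> \<not> Q \<Delta> \<and> (\<forall>\<Delta>'. \<Delta> \<subseteq> \<Delta>' \<longrightarrow> \<not> Q \<Delta>' \<longrightarrow> \<Delta>' = \<Delta>)"
proof -
  let ?F = "{\<Delta>. \<Gamma> \<subseteq> \<Delta> \<and> \<not> Q \<Delta>}"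
  have "\<forall>C\<in>chains ?F. \<exists>U\<in>?F. \<forall>X\<in>C. X \<subseteq> U"
  proof
    fix C assume C: "C \<in> chains ?F"
    show "\<exists>U\<in>?F. \<forall>X\<in>C. X \<subseteq> U"
    proof (cases "C = {}")
      case True then show ?thesis using g by auto
    next
      case False
      have "\<not> Q (\<Union>C)"
      proof
        assume "Q (\<Union>C)"
        then obtain \<Delta>0 where d0: "finite \<Delta>0" "\<Delta>0 \<subseteq> \<Union>C" "Q \<Delta>0" using fin by blast
        have "subset.chain UNIV C" using C by (simp add: chains_def chain_subset_alt_def)
        then obtain B where "B \<in> C" "\<Delta>0 \<subseteq> B" using finite_subset_Union_chain[OF d0(1) d0(2) False \<open>subset.chain UNIV C\<close>] by blast
        then have "Q B" using mono d0 by blast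
        then show False using \<open>B \<in> C\<close> C by (auto simp: chains_def)
      qed
      moreover have "\<Gamma> \<subseteq> \<Union>C" using False C by (auto simp: chains_def)
      ultimately show ?thesis by blast
    qed
  qed
  then obtain M where M: "M \<in> ?F" "\<forall>X\<in>?F. M \<subseteq> X \<longrightarrow> X = M" using Zorn_Lemma2[of ?F] by blast
  have GM: "\<Gamma> \<subseteq> M" "\<not> Q M" using M(1) by auto
  show ?thesis
  proof (intro exI conjI allI impI)
    fix \<Delta>' assume a: "M \<subseteq> \<Delta>'" "\<not> Q \<Delta>'"
    then have "\<Delta>' \<in> ?F" using GM by auto
    then show "\<Delta>' = M" using M(2) a(1) by blast
  qed (use GM in auto)
qed

section \<open>Modal semantics\<close>

fun meval :: "('w \<Rightarrow> 'w \<Rightarrow> bool) \<Rightarrow> ('w \<Rightarrow> 'a \<Rightarrow> bool) \<Rightarrow> 'w \<Rightarrow> 'a mfm \<Rightarrow> bool" where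
  "meval R V x (MVar p) = V x p"
| "meval R V x MBot = False"
| "meval R V x MTop = True"
| "meval R V x (MAnd A B) = (meval R V x A \<and> meval R V x B)"
| "meval R V x (MOr A B) = (meval R V x A \<or> meval R V x B)"
| "meval R V x (MImp A B) = (meval R V x A \<longrightarrow> meval R V x B)"
| "meval R V x (MBox A) = (\<forall>y. R x y \<longrightarrow> meval R V y A)"

definition transR :: "('w \<Rightarrow> 'w \<Rightarrow> bool) \<Rightarrow> bool" where
  "transR R \<longleftrightarrow> (\<forall>x y z. R x y \<longrightarrow> R y z \<longrightarrow> R x z)"

lemma ceval_meval: "ceval (\<lambda>\<phi>. meval R V x \<phi>) \<phi> = meval R V x \<phi>"
  by (induction \<phi>) auto

lemma K4_sound: "K4 \<phi> \<Longrightarrow> transR R \<Longrightarrow> meval R V x \<phi>"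
proof (induction arbitrary: x rule: K4.induct)
  case (taut A) then show ?case unfolding tautology_def using ceval_meval by metis
next
  case (axK A B) then show ?case by auto
next
  case (ax4 A) then show ?case unfolding transR_def by auto
next
  case (mp A B) then show ?case by auto
next
  case (nec A) then show ?case by auto
qed

section \<open>K4 derivability and canonical model\<close>

fun imps :: "'a mfm list \<Rightarrow> 'a mfm \<Rightarrow> 'a mfm" where
  "imps [] \<phi> = \<phi>"
| "imps (a#L) \<phi> = MImp a (imps L \<phi>)"

lemma ceval_imps: "ceval v (imps L \<phi>) = ((\<forall>a\<in>set L. ceval v a) \<longrightarrow> ceval v \<phi>)"
  by (induction L) auto

lemma K4_imps_mp: "K4 (imps L \<phi>) \<Longrightarrow> \<forall>a\<in>set L. K4 a \<Longrightarrow> K4 \<phi>"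
  by (induction L) (auto intro: K4.mp)

lemma K4_taut_cons:
  assumes "\<forall>a\<in>set L. K4 a" "\<forall>v. (\<forall>a\<in>set L. ceval v a) \<longrightarrow> ceval v \<phi>"
  shows "K4 \<phi>"
proof -
  have "K4 (imps L \<phi>)" by (rule K4.taut) (use assms(2) in \<open>auto simp: tautology_def ceval_imps\<close>)
  then show ?thesis using K4_imps_mp assms(1) by blast
qed

definition der :: "'a mfm set \<Rightarrow> 'a mfm \<Rightarrow> bool" where
  "der \<Gamma> \<phi> \<longleftrightarrow> (\<exists>L. set L \<subseteq> \<Gamma> \<and> K4 (imps L \<phi>))"

lemma der_cons: "\<forall>a\<in>set M. der \<Gamma> a \<Longrightarrow> \<forall>v. (\<forall>a\<in>set M. ceval v a) \<longrightarrow> ceval v \<phi> \<Longrightarrow> der \<Gamma> \<phi>"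
proof (induction M arbitrary: \<phi>)
  case Nil
  then have "K4 \<phi>" using K4_taut_cons[of "[]"] by simp
  then show ?case unfolding der_def by (intro exI[of _ "[]"]) simp
next
  case (Cons a M)
  have "der \<Gamma> (MImp a \<phi>)" using Cons.IH Cons.prems by auto
  then obtain L1 where L1: "set L1 \<subseteq> \<Gamma>" "K4 (imps L1 (MImp a \<phi>))" unfolding der_def by blast
  obtain L2 where L2: "set L2 \<subseteq> \<Gamma>" "K4 (imps L2 a)" using Cons.prems unfolding der_def by auto
  have "K4 (imps (L2 @ L1) \<phi>)"
    by (rule K4_taut_cons[of "[imps L2 a, imps L1 (MImp a \<phi>)]"]) (use L1 L2 in \<open>auto simp: ceval_imps\<close>)
  then show ?case unfolding der_def using L1 L2 by (intro exI[of _ "L2 @ L1"]) auto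
qed

lemma der_mem: "\<phi> \<in> \<Gamma> \<Longrightarrow> der \<Gamma> \<phi>"
  unfolding der_def
  by (intro exI[of _ "[\<phi>]"]) (auto intro!: K4.taut simp: tautology_def)

lemma der_deduct: "der (insert a \<Gamma>) \<phi> \<Longrightarrow> der \<Gamma> (MImp a \<phi>)"
proof -
  assume "der (insert a \<Gamma>) \<phi>"
  then obtain L where L: "set L \<subseteq> insert a \<Gamma>" "K4 (imps L \<phi>)" unfolding der_def by blast
  let ?L = "filter (\<lambda>x. x \<noteq> a) L"
  have "K4 (imps ?L (MImp a \<phi>))"
    by (rule K4_taut_cons[of "[imps L \<phi>]"]) (use L in \<open>auto simp: ceval_imps\<close>)
  then show ?thesis unfolding der_def using L by (intro exI[of _ ?L]) auto
qed

definition consistent :: "'a mfm set \<Rightarrow> bool" where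
  "consistent \<Gamma> \<longleftrightarrow> \<not> der \<Gamma> MBot"

definition MCS :: "'a mfm set \<Rightarrow> bool" where
  "MCS \<Gamma> \<longleftrightarrow> consistent \<Gamma> \<and> (\<forall>\<phi>. \<phi> \<notin> \<Gamma> \<longrightarrow> \<not> consistent (insert \<phi> \<Gamma>))"

lemma MCS_der: assumes "MCS \<Gamma>" "der \<Gamma> \<phi>" shows "\<phi> \<in> \<Gamma>"
proof (rule ccontr)
  assume "\<phi> \<notin> \<Gamma>"
  then have "der (insert \<phi> \<Gamma>) MBot" using assms(1) by (auto simp: MCS_def consistent_def)
  then have "der \<Gamma> (MImp \<phi> MBot)" by (rule der_deduct)
  then have "der \<Gamma> MBot" using der_cons[of "[\<phi>, MImp \<phi> MBot]" \<Gamma> MBot] assms(2) by auto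
  then show False using assms(1) by (auto simp: MCS_def consistent_def)
qed

lemma MCS_cons: "MCS \<Gamma> \<Longrightarrow> set M \<subseteq> \<Gamma> \<Longrightarrow> \<forall>v. (\<forall>a\<in>set M. ceval v a) \<longrightarrow> ceval v \<phi> \<Longrightarrow> \<phi> \<in> \<Gamma>"
  using der_cons[of M \<Gamma> \<phi>] der_mem MCS_der by blast

lemma MCS_neg: assumes "MCS \<Gamma>" "\<phi> \<notin> \<Gamma>" shows "MImp \<phi> MBot \<in> \<Gamma>"
proof -
  have "der (insert \<phi> \<Gamma>) MBot" using assms by (auto simp: MCS_def consistent_def)
  then show ?thesis using der_deduct MCS_der assms(1) by blast
qed

lemma MCS_bot: "MCS \<Gamma> \<Longrightarrow> MBot \<notin> \<Gamma>"
  using der_mem by (auto simp: MCS_def consistent_def)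

lemma MCS_imp: assumes "MCS \<Gamma>" shows "MImp a b \<in> \<Gamma> \<longleftrightarrow> (a \<in> \<Gamma> \<longrightarrow> b \<in> \<Gamma>)"
proof
  assume "MImp a b \<in> \<Gamma>" then show "a \<in> \<Gamma> \<longrightarrow> b \<in> \<Gamma>"
    using MCS_cons[OF assms, of "[MImp a b, a]" b] by auto
next
  assume h: "a \<in> \<Gamma> \<longrightarrow> b \<in> \<Gamma>"
  show "MImp a b \<in> \<Gamma>"
  proof (cases "a \<in> \<Gamma>")
    case True then show ?thesis using h MCS_cons[OF assms, of "[b]" "MImp a b"] by auto
  next
    case False then show ?thesis using MCS_neg[OF assms False] MCS_cons[OF assms, of "[MImp a MBot]" "MImp a b"] by auto
  qed
qed

lemma MCS_and: assumes "MCS \<Gamma>" shows "MAnd a b \<in> \<Gamma> \<longleftrightarrow> (a \<in> \<Gamma> \<and> b \<in> \<Gamma>)"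
proof -
  have 1: "a \<in> \<Gamma>" if "MAnd a b \<in> \<Gamma>" using MCS_cons[OF assms, of "[MAnd a b]" a] that by simp
  have 2: "b \<in> \<Gamma>" if "MAnd a b \<in> \<Gamma>" using MCS_cons[OF assms, of "[MAnd a b]" b] that by simp
  have 3: "MAnd a b \<in> \<Gamma>" if "a \<in> \<Gamma>" "b \<in> \<Gamma>" using MCS_cons[OF assms, of "[a, b]" "MAnd a b"] that by simp
  show ?thesis using 1 2 3 by blast
qed

lemma MCS_or: assumes "MCS \<Gamma>" shows "MOr a b \<in> \<Gamma> \<longleftrightarrow> (a \<in> \<Gamma> \<or> b \<in> \<Gamma>)"
proof
  assume h: "MOr a b \<in> \<Gamma>"
  show "a \<in> \<Gamma> \<or> b \<in> \<Gamma>"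
  proof (rule ccontr)
    assume "\<not> (a \<in> \<Gamma> \<or> b \<in> \<Gamma>)"
    then have "MImp a MBot \<in> \<Gamma>" "MImp b MBot \<in> \<Gamma>" using MCS_neg[OF assms] by auto
    then have "MBot \<in> \<Gamma>" using h MCS_cons[OF assms, of "[MOr a b, MImp a MBot, MImp b MBot]" MBot] by auto
    then show False using MCS_bot[OF assms] by simp
  qed
next
  have 1: "MOr a b \<in> \<Gamma>" if "a \<in> \<Gamma>" using MCS_cons[OF assms, of "[a]" "MOr a b"] that by simp
  have 2: "MOr a b \<in> \<Gamma>" if "b \<in> \<Gamma>" using MCS_cons[OF assms, of "[b]" "MOr a b"] that by simp
  assume "a \<in> \<Gamma> \<or> b \<in> \<Gamma>" then show "MOr a b \<in> \<Gamma>" using 1 2 by blast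
qed

lemma MCS_top: "MCS \<Gamma> \<Longrightarrow> MTop \<in> \<Gamma>"
  using MCS_cons[of \<Gamma> "[]" MTop] by simp

lemma MCS_K4: "MCS \<Gamma> \<Longrightarrow> K4 \<phi> \<Longrightarrow> \<phi> \<in> \<Gamma>"
proof -
  assume a: "MCS \<Gamma>" "K4 \<phi>"
  have "der \<Gamma> \<phi>" unfolding der_def using a(2) by (intro exI[of _ "[]"]) simp
  then show ?thesis using MCS_der a(1) by blast
qed

lemma lindenbaum: assumes "consistent \<Gamma>" shows "\<exists>\<Delta>. \<Gamma> \<subseteq> \<Delta> \<and> MCS \<Delta>"
proof -
  have "\<exists>\<Delta>. \<Gamma> \<subseteq> \<Delta> \<and> \<not> der \<Delta> MBot \<and> (\<forall>\<Delta>'. \<Delta> \<subseteq> \<Delta>' \<longrightarrow> \<not> der \<Delta>' MBot \<longrightarrow> \<Delta>' = \<Delta>)"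
  proof (rule zorn_ext)
    fix \<Delta> :: "'a mfm set" assume "der \<Delta> MBot"
    then obtain L where "set L \<subseteq> \<Delta>" "K4 (imps L MBot)" unfolding der_def by blast
    then show "\<exists>\<Delta>0. finite \<Delta>0 \<and> \<Delta>0 \<subseteq> \<Delta> \<and> der \<Delta>0 MBot" unfolding der_def
      by (intro exI[of _ "set L"]) auto
  next
    fix \<Delta> \<Delta>' :: "'a mfm set" assume "der \<Delta> MBot" "\<Delta> \<subseteq> \<Delta>'"
    then show "der \<Delta>' MBot" unfolding der_def by blast
  next
    show "\<not> der \<Gamma> MBot" using assms by (simp add: consistent_def)
  qed
  then obtain \<Delta> where d: "\<Gamma> \<subseteq> \<Delta>" "\<not> der \<Delta> MBot" "\<forall>\<Delta>'. \<Delta> \<subseteq> \<Delta>' \<longrightarrow> \<not> der \<Delta>' MBot \<longrightarrow> \<Delta>' = \<Delta>" by blast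
  have "MCS \<Delta>" unfolding MCS_def consistent_def
  proof (intro conjI allI impI)
    fix \<phi> assume "\<phi> \<notin> \<Delta>"
    then show "\<not> \<not> der (insert \<phi> \<Delta>) MBot" using d(3) by (metis insertI1 subset_insertI)
  qed (use d in auto)
  then show ?thesis using d by blast
qed

lemma box_lemma: "K4 (imps L \<phi>) \<Longrightarrow> K4 (imps (map MBox L) (MBox \<phi>))"
proof (induction L arbitrary: \<phi>)
  case Nil then show ?case by (simp add: K4.nec)
next
  case (Cons a L)
  have "K4 (imps L (MImp a \<phi>))"
    by (rule K4_taut_cons[of "[imps (a#L) \<phi>]"]) (use Cons.prems in \<open>auto simp: ceval_imps\<close>)
  then have h: "K4 (imps (map MBox L) (MBox (MImp a \<phi>)))" using Cons.IH by blast
  show ?case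
    by (rule K4_taut_cons[of "[imps (map MBox L) (MBox (MImp a \<phi>)), MImp (MBox (MImp a \<phi>)) (MImp (MBox a) (MBox \<phi>))]"])
       (use h K4.axK in \<open>auto simp: ceval_imps\<close>)
qed

definition canR :: "'a mfm set \<Rightarrow> 'a mfm set \<Rightarrow> bool" where
  "canR \<Gamma> \<Delta> \<longleftrightarrow> MCS \<Gamma> \<and> MCS \<Delta> \<and> (\<forall>\<phi>. MBox \<phi> \<in> \<Gamma> \<longrightarrow> \<phi> \<in> \<Delta>)"

definition canV :: "'a mfm set \<Rightarrow> 'a \<Rightarrow> bool" where
  "canV \<Gamma> p \<longleftrightarrow> MVar p \<in> \<Gamma>"

lemma canR_trans: "transR canR"
  unfolding transR_def canR_def
proof (intro allI impI conjI)
  fix x y z :: "'a mfm set" and \<phi>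
  assume a: "MCS x \<and> MCS y \<and> (\<forall>\<phi>. MBox \<phi> \<in> x \<longrightarrow> \<phi> \<in> y)" "MCS y \<and> MCS z \<and> (\<forall>\<phi>. MBox \<phi> \<in> y \<longrightarrow> \<phi> \<in> z)"
    "MBox \<phi> \<in> x"
  have "MImp (MBox \<phi>) (MBox (MBox \<phi>)) \<in> x" using a(1) MCS_K4 K4.ax4 by blast
  then have "MBox (MBox \<phi>) \<in> x" using a MCS_imp by blast
  then show "\<phi> \<in> z" using a by blast
qed (auto)

lemma truth_lemma: "MCS \<Gamma> \<Longrightarrow> meval canR canV \<Gamma> \<phi> \<longleftrightarrow> \<phi> \<in> \<Gamma>"
proof (induction \<phi> arbitrary: \<Gamma>)
  case (MVar x) then show ?case by (simp add: canV_def)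
next
  case MBot then show ?case using MCS_bot by auto
next
  case MTop then show ?case using MCS_top by auto
next
  case (MAnd \<phi>1 \<phi>2) then show ?case by (simp add: MCS_and MAnd.IH MAnd.prems)
next
  case (MOr \<phi>1 \<phi>2) then show ?case by (simp add: MCS_or MOr.IH MOr.prems)
next
  case (MImp \<phi>1 \<phi>2) then show ?case by (simp add: MCS_imp MImp.IH MImp.prems)
next
  case (MBox \<phi>)
  show ?case
  proof
    assume ev: "meval canR canV \<Gamma> (MBox \<phi>)"
    show "MBox \<phi> \<in> \<Gamma>"
    proof (rule ccontr)
      assume nb: "MBox \<phi> \<notin> \<Gamma>"
      let ?D = "insert (MImp \<phi> MBot) {\<psi>. MBox \<psi> \<in> \<Gamma>}"
      have "consistent ?D"
      proof (rule ccontr)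
        assume "\<not> consistent ?D"
        then have "der {\<psi>. MBox \<psi> \<in> \<Gamma>} (MImp (MImp \<phi> MBot) MBot)"
          using der_deduct[of "MImp \<phi> MBot" "{\<psi>. MBox \<psi> \<in> \<Gamma>}" MBot] unfolding consistent_def by simp
        then have "der {\<psi>. MBox \<psi> \<in> \<Gamma>} \<phi>" using der_cons[of "[MImp (MImp \<phi> MBot) MBot]" "{\<psi>. MBox \<psi> \<in> \<Gamma>}" \<phi>] by simp
        then obtain L where L: "set L \<subseteq> {\<psi>. MBox \<psi> \<in> \<Gamma>}" "K4 (imps L \<phi>)" by (auto simp: der_def)
        then have "K4 (imps (map MBox L) (MBox \<phi>))" using box_lemma by blast
        then have "der \<Gamma> (MBox \<phi>)" unfolding der_def using L by (intro exI[of _ "map MBox L"]) auto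
        then show False using nb MCS_der MBox.prems by blast
      qed
      then obtain \<Delta> where D: "?D \<subseteq> \<Delta>" "MCS \<Delta>" using lindenbaum by blast
      then have "canR \<Gamma> \<Delta>" using MBox.prems by (auto simp: canR_def)
      then have "meval canR canV \<Delta> \<phi>" using ev by simp
      then have "\<phi> \<in> \<Delta>" using MBox.IH D(2) by blast
      moreover have "MImp \<phi> MBot \<in> \<Delta>" using D(1) by auto
      ultimately show False using MCS_imp MCS_bot D(2) by blast
    qed
  next
    assume h: "MBox \<phi> \<in> \<Gamma>"
    show "meval canR canV \<Gamma> (MBox \<phi>)"
    proof (simp only: meval.simps, intro allI impI)
      fix y assume "canR \<Gamma> y"
      then have "MCS y" "\<phi> \<in> y" using h by (auto simp: canR_def)
      then show "meval canR canV y \<phi>" using MBox.IH by blast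
    qed
  qed
qed

lemma K4_complete:
  fixes \<phi> :: "'a mfm"
  assumes "\<And>(R :: 'a mfm set \<Rightarrow> 'a mfm set \<Rightarrow> bool) V x. transR R \<Longrightarrow> meval R V x \<phi>"
  shows "K4 \<phi>"
proof (rule ccontr)
  assume nk: "\<not> K4 \<phi>"
  have "consistent {MImp \<phi> MBot}" unfolding consistent_def
  proof
    assume "der {MImp \<phi> MBot} MBot"
    then obtain L where L: "set L \<subseteq> {MImp \<phi> MBot}" "K4 (imps L MBot)" unfolding der_def by blast
    have "K4 \<phi>" by (rule K4_taut_cons[of "[imps L MBot]"]) (use L in \<open>auto simp: ceval_imps\<close>)
    then show False using nk by simp
  qed
  then obtain \<Delta> where D: "MImp \<phi> MBot \<in> \<Delta>" "MCS \<Delta>" using lindenbaum by blast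
  have "meval canR canV \<Delta> \<phi>" by (rule assms[OF canR_trans])
  then have "\<phi> \<in> \<Delta>" using truth_lemma D(2) by blast
  then show False using D MCS_imp MCS_bot by blast
qed

section \<open>IPC: derivations from hypotheses and canonical model\<close>

inductive ded :: "'a fm set \<Rightarrow> 'a fm \<Rightarrow> bool" for \<Gamma> where
  dhyp: "A \<in> \<Gamma> \<Longrightarrow> ded \<Gamma> A"
| dax: "IPC A \<Longrightarrow> ded \<Gamma> A"
| dmp: "ded \<Gamma> (FImp A B) \<Longrightarrow> ded \<Gamma> A \<Longrightarrow> ded \<Gamma> B"

lemma ded_empty: "ded {} A \<Longrightarrow> IPC A"
  by (induction rule: ded.induct) (auto intro: IPC.mp)

lemma IPC_id: "IPC (FImp A A)"
proof -
  have 1: "IPC (FImp (FImp A (FImp (FImp A A) A)) (FImp (FImp A (FImp A A)) (FImp A A)))" by (rule IPC.ax2)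
  have 2: "IPC (FImp A (FImp (FImp A A) A))" by (rule IPC.ax1)
  have 3: "IPC (FImp A (FImp A A))" by (rule IPC.ax1)
  show ?thesis using IPC.mp[OF IPC.mp[OF 1 2] 3] .
qed

lemma ded_deduct: "ded (insert B \<Gamma>) A \<Longrightarrow> ded \<Gamma> (FImp B A)"
proof (induction rule: ded.induct)
  case (dhyp A)
  then show ?case
  proof
    assume "A = B" then show ?thesis using IPC_id ded.dax by blast
  next
    assume "A \<in> \<Gamma>" then show ?thesis using ded.dmp[OF ded.dax[OF IPC.ax1] ded.dhyp] by blast
  qed
next
  case (dax A) then show ?case using ded.dmp[OF ded.dax[OF IPC.ax1] ded.dax] by blast
next
  case (dmp A C)
  then show ?case using ded.dmp[OF ded.dmp[OF ded.dax[OF IPC.ax2]]] by blast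
qed

lemma ded_mono: "ded \<Gamma> A \<Longrightarrow> \<Gamma> \<subseteq> \<Delta> \<Longrightarrow> ded \<Delta> A"
  by (induction rule: ded.induct) (auto intro: ded.intros)

lemma ded_finite: "ded \<Gamma> A \<Longrightarrow> \<exists>\<Gamma>0. finite \<Gamma>0 \<and> \<Gamma>0 \<subseteq> \<Gamma> \<and> ded \<Gamma>0 A"
proof (induction rule: ded.induct)
  case (dhyp A) then show ?case by (intro exI[of _ "{A}"]) (auto intro: ded.dhyp)
next
  case (dax A) then show ?case by (intro exI[of _ "{}"]) (auto intro: ded.dax)
next
  case (dmp A B)
  then obtain G1 G2 where "finite G1" "G1 \<subseteq> \<Gamma>" "ded G1 (FImp A B)" "finite G2" "G2 \<subseteq> \<Gamma>" "ded G2 A" by blast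
  then show ?case
    by (intro exI[of _ "G1 \<union> G2"]) (auto intro: ded.dmp ded_mono)
qed

definition Wc :: "'a fm set set" where
  "Wc = {\<Delta>. (\<forall>B. ded \<Delta> B \<longrightarrow> B \<in> \<Delta>) \<and> FBot \<notin> \<Delta> \<and> (\<forall>B C. FOr B C \<in> \<Delta> \<longrightarrow> B \<in> \<Delta> \<or> C \<in> \<Delta>)}"

lemma ext_W: assumes "\<not> ded \<Gamma> A" shows "\<exists>\<Delta>\<in>Wc. \<Gamma> \<subseteq> \<Delta> \<and> A \<notin> \<Delta>"
proof -
  have "\<exists>\<Delta>. \<Gamma> \<subseteq> \<Delta> \<and> \<not> ded \<Delta> A \<and> (\<forall>\<Delta>'. \<Delta> \<subseteq> \<Delta>' \<longrightarrow> \<not> ded \<Delta>' A \<longrightarrow> \<Delta>' = \<Delta>)"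
    by (rule zorn_ext) (use ded_finite ded_mono assms in auto)
  then obtain \<Delta> where D: "\<Gamma> \<subseteq> \<Delta>" "\<not> ded \<Delta> A" "\<forall>\<Delta>'. \<Delta> \<subseteq> \<Delta>' \<longrightarrow> \<not> ded \<Delta>' A \<longrightarrow> \<Delta>' = \<Delta>" by blast
  have ins: "ded \<Delta> (FImp B A)" if "B \<notin> \<Delta>" for B
  proof -
    have "ded (insert B \<Delta>) A" using D(3) that by (metis insertI1 subset_insertI)
    then show ?thesis by (rule ded_deduct)
  qed
  have cl: "B \<in> \<Delta>" if "ded \<Delta> B" for B
    using ins[of B] that D(2) dmp by blast
  have "FBot \<notin> \<Delta>" using D(2) dhyp dmp[OF dax[OF IPC.ax9]] by blast
  moreover have "B \<in> \<Delta> \<or> C \<in> \<Delta>" if "FOr B C \<in> \<Delta>" for B C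
  proof (rule ccontr)
    assume "\<not> (B \<in> \<Delta> \<or> C \<in> \<Delta>)"
    then have "ded \<Delta> (FImp B A)" "ded \<Delta> (FImp C A)" using ins by auto
    then have "ded \<Delta> A" using dmp[OF dmp[OF dmp[OF dax[OF IPC.ax8]]]] dhyp[OF that] by blast
    then show False using D(2) by simp
  qed
  ultimately have "\<Delta> \<in> Wc" unfolding Wc_def using cl by blast
  moreover have "A \<notin> \<Delta>" using D(2) dhyp by blast
  ultimately show ?thesis using D(1) by blast
qed

definition icR :: "'a fm set \<Rightarrow> 'a fm set \<Rightarrow> bool" where
  "icR \<Delta> \<Delta>' \<longleftrightarrow> \<Delta>' \<in> Wc \<and> \<Delta> \<subseteq> \<Delta>'"

definition icV :: "'a fm set \<Rightarrow> 'a \<Rightarrow> bool" where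
  "icV \<Delta> p \<longleftrightarrow> Atom p \<in> \<Delta>"

lemma icR_trans: "transR icR"
  unfolding transR_def icR_def by auto

lemma icR_W: "icR \<Delta> \<Delta>' \<Longrightarrow> \<Delta>' \<in> Wc"
  by (simp add: icR_def)

lemma Wc_ded: "\<Delta> \<in> Wc \<Longrightarrow> ded \<Delta> B \<Longrightarrow> B \<in> \<Delta>"
  unfolding Wc_def by blast

lemma Wc_and: assumes "\<Delta> \<in> Wc" shows "FAnd B C \<in> \<Delta> \<longleftrightarrow> B \<in> \<Delta> \<and> C \<in> \<Delta>"
proof
  assume h: "FAnd B C \<in> \<Delta>"
  have "ded \<Delta> B" using ded.dmp[OF ded.dax[OF IPC.ax3] ded.dhyp[OF h]] .
  moreover have "ded \<Delta> C" using ded.dmp[OF ded.dax[OF IPC.ax4] ded.dhyp[OF h]] .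
  ultimately show "B \<in> \<Delta> \<and> C \<in> \<Delta>" using Wc_ded[OF assms] by blast
next
  assume h: "B \<in> \<Delta> \<and> C \<in> \<Delta>"
  have "ded \<Delta> (FAnd B C)"
    using ded.dmp[OF ded.dmp[OF ded.dax[OF IPC.ax5] ded.dhyp] ded.dhyp] h by blast
  then show "FAnd B C \<in> \<Delta>" using Wc_ded[OF assms] by blast
qed

lemma Wc_or: assumes "\<Delta> \<in> Wc" shows "FOr B C \<in> \<Delta> \<longleftrightarrow> B \<in> \<Delta> \<or> C \<in> \<Delta>"
proof
  assume h: "FOr B C \<in> \<Delta>"
  then show "B \<in> \<Delta> \<or> C \<in> \<Delta>" using assms unfolding Wc_def by blast
next
  assume h: "B \<in> \<Delta> \<or> C \<in> \<Delta>"
  have "ded \<Delta> (FOr B C)"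
  proof (cases "B \<in> \<Delta>")
    case True then show ?thesis using ded.dmp[OF ded.dax[OF IPC.ax6] ded.dhyp] by blast
  next
    case False then have "C \<in> \<Delta>" using h by blast
    then show ?thesis using ded.dmp[OF ded.dax[OF IPC.ax7] ded.dhyp] by blast
  qed
  then show "FOr B C \<in> \<Delta>" using Wc_ded[OF assms] by blast
qed

lemma Wc_imp: assumes "\<Delta> \<in> Wc"
  shows "FImp B C \<in> \<Delta> \<longleftrightarrow> (\<forall>\<Delta>'\<in>Wc. \<Delta> \<subseteq> \<Delta>' \<longrightarrow> B \<in> \<Delta>' \<longrightarrow> C \<in> \<Delta>')"
proof
  assume h: "FImp B C \<in> \<Delta>"
  show "\<forall>\<Delta>'\<in>Wc. \<Delta> \<subseteq> \<Delta>' \<longrightarrow> B \<in> \<Delta>' \<longrightarrow> C \<in> \<Delta>'"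
  proof (intro ballI impI)
    fix \<Delta>' assume a: "\<Delta>' \<in> Wc" "\<Delta> \<subseteq> \<Delta>'" "B \<in> \<Delta>'"
    have "FImp B C \<in> \<Delta>'" using h a(2) by blast
    then have "ded \<Delta>' C" using ded.dmp[OF ded.dhyp ded.dhyp[OF a(3)]] by blast
    then show "C \<in> \<Delta>'" using Wc_ded[OF a(1)] by blast
  qed
next
  assume h: "\<forall>\<Delta>'\<in>Wc. \<Delta> \<subseteq> \<Delta>' \<longrightarrow> B \<in> \<Delta>' \<longrightarrow> C \<in> \<Delta>'"
  show "FImp B C \<in> \<Delta>"
  proof (rule ccontr)
    assume "FImp B C \<notin> \<Delta>"
    then have "\<not> ded \<Delta> (FImp B C)" using Wc_ded[OF assms] by blast
    then have "\<not> ded (insert B \<Delta>) C" using ded_deduct by blast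
    then obtain \<Delta>' where "\<Delta>' \<in> Wc" "insert B \<Delta> \<subseteq> \<Delta>'" "C \<notin> \<Delta>'" using ext_W by blast
    then show False using h by blast
  qed
qed

lemma topimp_Wc:
  assumes "\<forall>\<Delta>\<in>Wc. meval icR icV \<Delta> (G X) \<longleftrightarrow> B \<in> \<Delta>"
  shows "\<forall>\<Delta>\<in>Wc. meval icR icV \<Delta> (G (topimp k X)) \<longleftrightarrow> B \<in> \<Delta>"
proof (induction k)
  case 0 show ?case using assms by (simp only: topimp.simps)
next
  case (Suc k)
  show ?case
  proof
    fix \<Delta> :: "'a fm set" assume D: "\<Delta> \<in> Wc"
    have "meval icR icV \<Delta> (G (topimp (Suc k) X)) \<longleftrightarrow> (\<forall>\<Delta>'. icR \<Delta> \<Delta>' \<longrightarrow> meval icR icV \<Delta>' (G (topimp k X)))"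
      by simp
    also have "\<dots> \<longleftrightarrow> (\<forall>\<Delta>'\<in>Wc. \<Delta> \<subseteq> \<Delta>' \<longrightarrow> B \<in> \<Delta>')"
      using Suc.IH unfolding icR_def by blast
    also have "\<dots> \<longleftrightarrow> B \<in> \<Delta>" using D by blast
    finally show "meval icR icV \<Delta> (G (topimp (Suc k) X)) \<longleftrightarrow> B \<in> \<Delta>" .
  qed
qed

lemma ipc_truth:
  "(\<forall>\<Delta>\<in>Wc. meval icR icV \<Delta> (G (pos n B)) \<longleftrightarrow> B \<in> \<Delta>) \<and> (\<forall>\<Delta>\<in>Wc. meval icR icV \<Delta> (G (neg n B)) \<longleftrightarrow> B \<in> \<Delta>)"
proof (induction B)
  case (Atom p)
  have i: "\<forall>\<Delta>\<in>Wc. meval icR icV \<Delta> (G (TAtom p)) \<longleftrightarrow> Atom p \<in> \<Delta>"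
  proof
    fix \<Delta> :: "'a fm set" assume D: "\<Delta> \<in> Wc"
    show "meval icR icV \<Delta> (G (TAtom p)) \<longleftrightarrow> Atom p \<in> \<Delta>"
      using D by (auto simp: icR_def icV_def)
  qed
  show ?case using topimp_Wc[OF i, of n] i by (simp only: pos.simps neg.simps)
next
  case FBot
  have i: "\<forall>\<Delta>\<in>Wc. meval icR icV \<Delta> (G TBot) \<longleftrightarrow> FBot \<in> \<Delta>" by (auto simp: Wc_def)
  show ?case using topimp_Wc[OF i, of n] i by (simp only: pos.simps neg.simps)
next
  case (FAnd B C)
  have ihB: "\<And>\<Delta>. \<Delta> \<in> Wc \<Longrightarrow> meval icR icV \<Delta> (G (pos n B)) = (B \<in> \<Delta>)"
    "\<And>\<Delta>. \<Delta> \<in> Wc \<Longrightarrow> meval icR icV \<Delta> (G (neg n B)) = (B \<in> \<Delta>)" using FAnd.IH(1) by auto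
  have ihC: "\<And>\<Delta>. \<Delta> \<in> Wc \<Longrightarrow> meval icR icV \<Delta> (G (pos n C)) = (C \<in> \<Delta>)"
    "\<And>\<Delta>. \<Delta> \<in> Wc \<Longrightarrow> meval icR icV \<Delta> (G (neg n C)) = (C \<in> \<Delta>)" using FAnd.IH(2) by auto
  have i: "\<forall>\<Delta>\<in>Wc. meval icR icV \<Delta> (G (TAnd (pos n B) (pos n C))) \<longleftrightarrow> FAnd B C \<in> \<Delta>"
  proof
    fix \<Delta> :: "'a fm set" assume D: "\<Delta> \<in> Wc"
    show "meval icR icV \<Delta> (G (TAnd (pos n B) (pos n C))) \<longleftrightarrow> FAnd B C \<in> \<Delta>"
      by (simp add: ihB(1) ihC(1) Wc_and[OF D] D)
  qed
  have j: "\<forall>\<Delta>\<in>Wc. meval icR icV \<Delta> (G (neg n (FAnd B C))) \<longleftrightarrow> FAnd B C \<in> \<Delta>"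
  proof
    fix \<Delta> :: "'a fm set" assume D: "\<Delta> \<in> Wc"
    show "meval icR icV \<Delta> (G (neg n (FAnd B C))) \<longleftrightarrow> FAnd B C \<in> \<Delta>"
      by (simp add: ihB(2) ihC(2) Wc_and[OF D] D)
  qed
  show ?case using topimp_Wc[OF i, of n] j by (simp only: pos.simps)
next
  case (FOr B C)
  have ihB: "\<And>\<Delta>. \<Delta> \<in> Wc \<Longrightarrow> meval icR icV \<Delta> (G (pos n B)) = (B \<in> \<Delta>)"
    "\<And>\<Delta>. \<Delta> \<in> Wc \<Longrightarrow> meval icR icV \<Delta> (G (neg n B)) = (B \<in> \<Delta>)" using FOr.IH(1) by auto
  have ihC: "\<And>\<Delta>. \<Delta> \<in> Wc \<Longrightarrow> meval icR icV \<Delta> (G (pos n C)) = (C \<in> \<Delta>)"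
    "\<And>\<Delta>. \<Delta> \<in> Wc \<Longrightarrow> meval icR icV \<Delta> (G (neg n C)) = (C \<in> \<Delta>)" using FOr.IH(2) by auto
  have i: "\<forall>\<Delta>\<in>Wc. meval icR icV \<Delta> (G (TOr (pos n B) (pos n C))) \<longleftrightarrow> FOr B C \<in> \<Delta>"
  proof
    fix \<Delta> :: "'a fm set" assume D: "\<Delta> \<in> Wc"
    show "meval icR icV \<Delta> (G (TOr (pos n B) (pos n C))) \<longleftrightarrow> FOr B C \<in> \<Delta>"
      by (simp add: ihB(1) ihC(1) Wc_or[OF D] D)
  qed
  have j: "\<forall>\<Delta>\<in>Wc. meval icR icV \<Delta> (G (neg n (FOr B C))) \<longleftrightarrow> FOr B C \<in> \<Delta>"
  proof
    fix \<Delta> :: "'a fm set" assume D: "\<Delta> \<in> Wc"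
    show "meval icR icV \<Delta> (G (neg n (FOr B C))) \<longleftrightarrow> FOr B C \<in> \<Delta>"
      by (simp add: ihB(2) ihC(2) Wc_or[OF D] D)
  qed
  show ?case using topimp_Wc[OF i, of n] j by (simp only: pos.simps)
next
  case (FImp B C)
  have ihB: "\<And>\<Delta>. \<Delta> \<in> Wc \<Longrightarrow> meval icR icV \<Delta> (G (pos n B)) = (B \<in> \<Delta>)"
    "\<And>\<Delta>. \<Delta> \<in> Wc \<Longrightarrow> meval icR icV \<Delta> (G (neg n B)) = (B \<in> \<Delta>)" using FImp.IH(1) by auto
  have ihC: "\<And>\<Delta>. \<Delta> \<in> Wc \<Longrightarrow> meval icR icV \<Delta> (G (pos n C)) = (C \<in> \<Delta>)"
    "\<And>\<Delta>. \<Delta> \<in> Wc \<Longrightarrow> meval icR icV \<Delta> (G (neg n C)) = (C \<in> \<Delta>)" using FImp.IH(2) by auto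
  have i: "\<forall>\<Delta>\<in>Wc. meval icR icV \<Delta> (G (TImp (neg n B) (pos n C))) \<longleftrightarrow> FImp B C \<in> \<Delta>"
  proof
    fix \<Delta> :: "'a fm set" assume D: "\<Delta> \<in> Wc"
    show "meval icR icV \<Delta> (G (TImp (neg n B) (pos n C))) \<longleftrightarrow> FImp B C \<in> \<Delta>"
      proof -
        have "meval icR icV \<Delta> (G (TImp (neg n B) (pos n C))) \<longleftrightarrow> (\<forall>\<Delta>'. icR \<Delta> \<Delta>' \<longrightarrow> meval icR icV \<Delta>' (G (neg n B)) \<longrightarrow> meval icR icV \<Delta>' (G (pos n C)))" by simp
        also have "\<dots> \<longleftrightarrow> (\<forall>\<Delta>'. icR \<Delta> \<Delta>' \<longrightarrow> B \<in> \<Delta>' \<longrightarrow> C \<in> \<Delta>')"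
        proof (intro iffI allI impI)
          fix \<Delta>' assume L: "\<forall>\<Delta>'. icR \<Delta> \<Delta>' \<longrightarrow> meval icR icV \<Delta>' (G (neg n B)) \<longrightarrow> meval icR icV \<Delta>' (G (pos n C))"
            and r: "icR \<Delta> \<Delta>'" and b: "B \<in> \<Delta>'"
          have W: "\<Delta>' \<in> Wc" using icR_W[OF r] .
          have "meval icR icV \<Delta>' (G (neg n B))" using b ihB(2)[OF W] by simp
          then have "meval icR icV \<Delta>' (G (pos n C))" using L r by blast
          then show "C \<in> \<Delta>'" using ihC(1)[OF W] by simp
        next
          fix \<Delta>' assume L: "\<forall>\<Delta>'. icR \<Delta> \<Delta>' \<longrightarrow> B \<in> \<Delta>' \<longrightarrow> C \<in> \<Delta>'"
            and r: "icR \<Delta> \<Delta>'" and b: "meval icR icV \<Delta>' (G (neg n B))"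
          have W: "\<Delta>' \<in> Wc" using icR_W[OF r] .
          have "B \<in> \<Delta>'" using b ihB(2)[OF W] by simp
          then have "C \<in> \<Delta>'" using L r by blast
          then show "meval icR icV \<Delta>' (G (pos n C))" using ihC(1)[OF W] by simp
        qed
        also have "\<dots> \<longleftrightarrow> (\<forall>\<Delta>'\<in>Wc. \<Delta> \<subseteq> \<Delta>' \<longrightarrow> B \<in> \<Delta>' \<longrightarrow> C \<in> \<Delta>')" by (auto simp: icR_def)
        also have "\<dots> \<longleftrightarrow> FImp B C \<in> \<Delta>" using Wc_imp[OF D] by blast
        finally show ?thesis .
      qed
  qed
  have j: "\<forall>\<Delta>\<in>Wc. meval icR icV \<Delta> (G (neg n (FImp B C))) \<longleftrightarrow> FImp B C \<in> \<Delta>"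
  proof
    fix \<Delta> :: "'a fm set" assume D: "\<Delta> \<in> Wc"
    show "meval icR icV \<Delta> (G (neg n (FImp B C))) \<longleftrightarrow> FImp B C \<in> \<Delta>"
      proof -
        have "meval icR icV \<Delta> (G (neg n (FImp B C))) \<longleftrightarrow> (\<forall>\<Delta>'. icR \<Delta> \<Delta>' \<longrightarrow> meval icR icV \<Delta>' (G (pos n B)) \<longrightarrow> meval icR icV \<Delta>' (G (neg n C)))" by simp
        also have "\<dots> \<longleftrightarrow> (\<forall>\<Delta>'. icR \<Delta> \<Delta>' \<longrightarrow> B \<in> \<Delta>' \<longrightarrow> C \<in> \<Delta>')"
        proof (intro iffI allI impI)
          fix \<Delta>' assume L: "\<forall>\<Delta>'. icR \<Delta> \<Delta>' \<longrightarrow> meval icR icV \<Delta>' (G (pos n B)) \<longrightarrow> meval icR icV \<Delta>' (G (neg n C))"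
            and r: "icR \<Delta> \<Delta>'" and b: "B \<in> \<Delta>'"
          have W: "\<Delta>' \<in> Wc" using icR_W[OF r] .
          have "meval icR icV \<Delta>' (G (pos n B))" using b ihB(1)[OF W] by simp
          then have "meval icR icV \<Delta>' (G (neg n C))" using L r by blast
          then show "C \<in> \<Delta>'" using ihC(2)[OF W] by simp
        next
          fix \<Delta>' assume L: "\<forall>\<Delta>'. icR \<Delta> \<Delta>' \<longrightarrow> B \<in> \<Delta>' \<longrightarrow> C \<in> \<Delta>'"
            and r: "icR \<Delta> \<Delta>'" and b: "meval icR icV \<Delta>' (G (pos n B))"
          have W: "\<Delta>' \<in> Wc" using icR_W[OF r] .
          have "B \<in> \<Delta>'" using b ihB(1)[OF W] by simp
          then have "C \<in> \<Delta>'" using L r by blast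
          then show "meval icR icV \<Delta>' (G (neg n C))" using ihC(2)[OF W] by simp
        qed
        also have "\<dots> \<longleftrightarrow> (\<forall>\<Delta>'\<in>Wc. \<Delta> \<subseteq> \<Delta>' \<longrightarrow> B \<in> \<Delta>' \<longrightarrow> C \<in> \<Delta>')" by (auto simp: icR_def)
        also have "\<dots> \<longleftrightarrow> FImp B C \<in> \<Delta>" using Wc_imp[OF D] by blast
        finally show ?thesis .
      qed
  qed
  show ?case using topimp_Wc[OF i, of n] j by (simp only: pos.simps)
qed

lemma back_dir: fixes A :: "'a fm" assumes "K4 (G (Tr A))" shows "IPC A"
proof (rule ccontr)
  assume "\<not> IPC A"
  then have "\<not> ded {} A" using ded_empty by blast
  then obtain \<Delta> where D: "\<Delta> \<in> Wc" "A \<notin> \<Delta>" using ext_W by blast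
  have "meval icR icV \<Delta> (G (pos (w A) A))" using K4_sound[OF assms[unfolded Tr_def] icR_trans] .
  then show False using ipc_truth D by blast
qed

section \<open>Intuitionistic forcing\<close>

fun frc :: "('w \<Rightarrow> 'w \<Rightarrow> bool) \<Rightarrow> ('w \<Rightarrow> 'a \<Rightarrow> bool) \<Rightarrow> 'w \<Rightarrow> 'a fm \<Rightarrow> bool" where
  "frc le V x (Atom p) = V x p"
| "frc le V x FBot = False"
| "frc le V x (FAnd A B) = (frc le V x A \<and> frc le V x B)"
| "frc le V x (FOr A B) = (frc le V x A \<or> frc le V x B)"
| "frc le V x (FImp A B) = (\<forall>y. le x y \<longrightarrow> frc le V y A \<longrightarrow> frc le V y B)"

lemma frc_persist:
  assumes trH: "\<forall>x y z. le x y \<longrightarrow> le y z \<longrightarrow> le x z"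
    and pvH: "\<forall>x y p. le x y \<longrightarrow> V x p \<longrightarrow> V y p"
  shows "le x y \<Longrightarrow> frc le V x A \<Longrightarrow> frc le V y A"
proof (induction A arbitrary: x y)
  case (Atom p) then show ?case using pvH by simp
next
  case FBot then show ?case by simp
next
  case (FAnd A B)
  have "frc le V y A" using FAnd.IH(1)[OF FAnd.prems(1)] FAnd.prems(2) by simp
  moreover have "frc le V y B" using FAnd.IH(2)[OF FAnd.prems(1)] FAnd.prems(2) by simp
  ultimately show ?case by simp
next
  case (FOr A B)
  show ?case
  proof (cases "frc le V x A")
    case True then show ?thesis using FOr.IH(1)[OF FOr.prems(1)] by simp
  next
    case False then have "frc le V x B" using FOr.prems(2) by simp
    then show ?thesis using FOr.IH(2)[OF FOr.prems(1)] by simp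
  qed
next
  case (FImp A B)
  show ?case
  proof (simp only: frc.simps, intro allI impI)
    fix z assume "le y z" "frc le V z A"
    moreover have "le x z" using trH FImp.prems(1) \<open>le y z\<close> by blast
    ultimately show "frc le V z B" using FImp.prems(2) by simp
  qed
qed

lemma frc_sound:
  assumes trH: "\<forall>x y z. le x y \<longrightarrow> le y z \<longrightarrow> le x z"
    and rfH: "\<forall>x y. le x y \<longrightarrow> le y y"
    and pvH: "\<forall>x y p. le x y \<longrightarrow> V x p \<longrightarrow> V y p"
  shows "IPC A \<Longrightarrow> le x x \<Longrightarrow> frc le V x A"
proof -
  have tr: "\<And>x y z. le x y \<Longrightarrow> le y z \<Longrightarrow> le x z" using trH by blast
  have rf: "\<And>x y. le x y \<Longrightarrow> le y y" using rfH by blast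
  show "IPC A \<Longrightarrow> le x x \<Longrightarrow> frc le V x A"
proof (induction arbitrary: x rule: IPC.induct)
  case (ax1 A B)
  show ?case
  proof (simp only: frc.simps, intro allI impI)
    fix y z assume "le x y" "frc le V y A" "le y z" "frc le V z B"
    then show "frc le V z A" using frc_persist[OF trH pvH] by blast
  qed
next
  case (ax2 A B C)
  show ?case
  proof (simp only: frc.simps, intro allI impI)
    fix y z u
    assume a: "le x y" "\<forall>v. le y v \<longrightarrow> frc le V v A \<longrightarrow> (\<forall>t. le v t \<longrightarrow> frc le V t B \<longrightarrow> frc le V t C)"
      "le y z" "\<forall>v. le z v \<longrightarrow> frc le V v A \<longrightarrow> frc le V v B" "le z u" "frc le V u A"
    have "le u u" using rf a(5) .
    have "le y u" using tr a(3) a(5) .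
    have "frc le V u B" using a(4) a(5) a(6) by blast
    then show "frc le V u C" using a(2) \<open>le y u\<close> a(6) \<open>le u u\<close> by blast
  qed
next
  case (ax3 A B) then show ?case by simp
next
  case (ax4 A B) then show ?case by simp
next
  case (ax5 A B)
  show ?case
  proof (simp only: frc.simps, intro allI impI conjI)
    fix y z assume "le x y" "frc le V y A" "le y z" "frc le V z B"
    then show "frc le V z A" using frc_persist[OF trH pvH] by blast
  next
    fix y z assume "le x y" "frc le V y A" "le y z" "frc le V z B"
    then show "frc le V z B" by blast
  qed
next
  case (ax6 A B) then show ?case by simp
next
  case (ax7 A B) then show ?case by simp
next
  case (ax8 A C B)
  show ?case
  proof (simp only: frc.simps, intro allI impI)
    fix y z u
    assume a: "le x y" "\<forall>v. le y v \<longrightarrow> frc le V v A \<longrightarrow> frc le V v C"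
      "le y z" "\<forall>v. le z v \<longrightarrow> frc le V v B \<longrightarrow> frc le V v C" "le z u" "frc le V u A \<or> frc le V u B"
    have "le u u" using rf a(5) .
    have "le y u" using tr a(3) a(5) .
    show "frc le V u C" using a(2) a(4) a(5) a(6) \<open>le y u\<close> \<open>le u u\<close> by blast
  qed
next
  case (ax9 A) then show ?case by simp
next
  case (mp A B)
  have h1: "\<forall>y. le x y \<longrightarrow> frc le V y A \<longrightarrow> frc le V y B" using mp.IH(1)[OF mp.prems] by simp
  then show ?case using mp.IH(2)[OF mp.prems] mp.prems by blast
qed
qed

fun boxes :: "nat \<Rightarrow> 'a mfm \<Rightarrow> 'a mfm" where
  "boxes 0 \<phi> = \<phi>"
| "boxes (Suc k) \<phi> = MBox (MImp MTop (boxes k \<phi>))"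

lemma G_topimp: "G (topimp k X) = boxes k (G X)"
  by (induction k) auto

fun pinner :: "nat \<Rightarrow> 'a fm \<Rightarrow> 'a tfm" where
  "pinner n (Atom p) = TAtom p"
| "pinner n FBot = TBot"
| "pinner n (FAnd A B) = TAnd (pos n A) (pos n B)"
| "pinner n (FOr A B) = TOr (pos n A) (pos n B)"
| "pinner n (FImp A B) = TImp (neg n A) (pos n B)"

lemma pos_pinner: "pos n B = topimp n (pinner n B)"
  by (cases B) auto

fun ncomps :: "nat \<Rightarrow> 'a fm \<Rightarrow> 'a mfm set" where
  "ncomps n (Atom p) = {MBox (MVar p)}"
| "ncomps n FBot = {}"
| "ncomps n (FAnd A B) = ncomps n A \<union> ncomps n B"
| "ncomps n (FOr A B) = ncomps n A \<union> ncomps n B"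
| "ncomps n (FImp A B) = {G (neg n (FImp A B))}"

fun Tset :: "nat \<Rightarrow> 'a fm \<Rightarrow> 'a mfm set" where
  "Tset n (Atom p) = {MBox (MVar p)}"
| "Tset n FBot = {}"
| "Tset n (FAnd A B) = Tset n A \<union> Tset n B"
| "Tset n (FOr A B) = Tset n A \<union> Tset n B"
| "Tset n (FImp A B) = insert (G (neg n (FImp A B))) (Tset n A \<union> Tset n B)"

fun gc :: "'a fm \<Rightarrow> nat" where
  "gc (Atom p) = 1"
| "gc FBot = 0"
| "gc (FAnd A B) = gc A + gc B"
| "gc (FOr A B) = gc A + gc B"
| "gc (FImp A B) = Suc (gc A + gc B)"

lemma ncomps_Tset: "ncomps n B \<subseteq> Tset n B"
  by (induction B) auto

lemma finite_Tset: "finite (Tset n B)"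
  by (induction B) auto

lemma card_Tset: "card (Tset n B) \<le> gc B"
proof (induction B)
  case (FAnd A B) then show ?case using card_Un_le[of "Tset n A" "Tset n B"] by simp
next
  case (FOr A B) then show ?case using card_Un_le[of "Tset n A" "Tset n B"] by simp
next
  case (FImp A B)
  have "card (insert (G (neg n (FImp A B))) (Tset n A \<union> Tset n B)) \<le> Suc (card (Tset n A \<union> Tset n B))"
    by (simp add: card_insert_if finite_Tset)
  then show ?case using FImp card_Un_le[of "Tset n A" "Tset n B"] by simp
qed auto

lemma Tset_boxed: "\<phi> \<in> Tset n B \<Longrightarrow> \<exists>\<psi>. \<phi> = MBox \<psi>"
  by (induction B) auto

lemma w_ge2: "w A \<ge> 2"
proof (induction A)
  case (FAnd A B)
  have "w A * 1 \<le> w A * (1 + w B)" by (rule mult_le_mono2) simp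
  then show ?case using FAnd by simp
next
  case (FImp A B)
  have "1 * 1 \<le> w A * w B" using FImp by (intro mult_le_mono) auto
  then show ?case by simp
qed auto

lemma gc_lt_w: "gc A < w A"
proof (induction A)
  case (FAnd A B)
  have h: "2 * w B \<le> w A * w B" using w_ge2[of A] by (rule mult_le_mono1)
  have e: "w (FAnd A B) = w A + w A * w B" by (simp add: algebra_simps)
  have e2: "gc (FAnd A B) = gc A + gc B" by simp
  show ?case using FAnd.IH h e e2 by linarith
next
  case (FImp A B)
  have "2 * w B \<le> w A * w B" using w_ge2[of A] by (rule mult_le_mono1)
  moreover have "2 * w A \<le> w A * w B" using w_ge2[of B] mult_le_mono2[of 2 "w B" "w A"] by (simp add: mult.commute)
  moreover have "w (FImp A B) = 1 + w A * w B" "gc (FImp A B) = 1 + gc A + gc B" by simp_all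
  ultimately show ?case using FImp.IH by linarith
qed auto

section \<open>Semantic argument on transitive models\<close>

locale tm =
  fixes R :: "'w \<Rightarrow> 'w \<Rightarrow> bool" and V :: "'w \<Rightarrow> 'a \<Rightarrow> bool"
  assumes tr: "\<And>x y z. R x y \<Longrightarrow> R y z \<Longrightarrow> R x z"
begin

abbreviation ev :: "'w \<Rightarrow> 'a mfm \<Rightarrow> bool" where "ev x \<phi> \<equiv> meval R V x \<phi>"

lemma box_persist: "R x y \<Longrightarrow> ev x (MBox \<phi>) \<Longrightarrow> ev y (MBox \<phi>)"
  using tr by auto

lemma allsucc_boxes: "(\<forall>y. R x y \<longrightarrow> ev y \<Psi>) \<Longrightarrow> ev x (boxes (Suc k) \<Psi>)"
proof (induction k arbitrary: x)
  case 0 show ?case using 0 by simp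
next
  case (Suc k)
  have "\<forall>z. R y z \<longrightarrow> ev z \<Psi>" if "R x y" for y using Suc.prems that tr by blast
  then have "\<forall>y. R x y \<longrightarrow> ev y (boxes (Suc k) \<Psi>)" using Suc.IH by blast
  then show ?case by simp
qed

definition tyP :: "'a mfm set \<Rightarrow> 'w \<Rightarrow> 'a mfm set" where
  "tyP T z = {\<phi>\<in>T. ev z \<phi>}"

definition loop :: "'a mfm set \<Rightarrow> 'w \<Rightarrow> bool" where
  "loop T z \<longleftrightarrow> (\<exists>u. R z u \<and> tyP T u = tyP T z)"

lemma tyP_mono: assumes "\<forall>\<phi>\<in>T. \<exists>\<psi>. \<phi> = MBox \<psi>" "R z z'" shows "tyP T z \<subseteq> tyP T z'"
proof
  fix \<phi> assume "\<phi> \<in> tyP T z"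
  then have p: "\<phi> \<in> T" "ev z \<phi>" unfolding tyP_def by auto
  then obtain \<psi> where "\<phi> = MBox \<psi>" using assms(1) by blast
  then have "ev z' \<phi>" using box_persist[OF assms(2)] p(2) by simp
  then show "\<phi> \<in> tyP T z'" using p(1) unfolding tyP_def by simp
qed

lemma chain:
  assumes fin: "finite T" and bx: "\<forall>\<phi>\<in>T. \<exists>\<psi>. \<phi> = MBox \<psi>"
  shows "card (T - tyP T z) < k \<Longrightarrow> (\<forall>v. (v = z \<or> R z v) \<longrightarrow> loop T v \<longrightarrow> (\<forall>v'. R v v' \<longrightarrow> ev v' \<Psi>))
    \<Longrightarrow> ev z (boxes k \<Psi>)"
proof (induction k arbitrary: z)
  case 0 then show ?case by simp
next
  case (Suc j)
  show ?case
  proof (cases "loop T z")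
    case True
    then have "\<forall>y. R z y \<longrightarrow> ev y \<Psi>" using Suc.prems(2) by blast
    then show ?thesis by (rule allsucc_boxes)
  next
    case False
    have "ev y (boxes j \<Psi>)" if "R z y" for y
    proof -
      have sub: "tyP T z \<subseteq> tyP T y" using tyP_mono[OF bx that] .
      have ne: "tyP T y \<noteq> tyP T z" using False that unfolding loop_def by blast
      have "tyP T y \<subseteq> T" "tyP T z \<subseteq> T" unfolding tyP_def by auto
      then have "T - tyP T y \<subset> T - tyP T z" using sub ne by blast
      then have "card (T - tyP T y) < card (T - tyP T z)"
        using fin by (meson finite_Diff psubset_card_mono)
      then have c: "card (T - tyP T y) < j" using Suc.prems(1) by simp
      have "\<forall>v. (v = y \<or> R y v) \<longrightarrow> loop T v \<longrightarrow> (\<forall>v'. R v v' \<longrightarrow> ev v' \<Psi>)"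
        using Suc.prems(2) that tr by blast
      then show ?thesis using Suc.IH c by blast
    qed
    then show ?thesis by simp
  qed
qed

definition le :: "'a mfm set \<Rightarrow> 'w \<Rightarrow> 'w \<Rightarrow> bool" where
  "le T x y \<longleftrightarrow> loop T y \<and> (x = y \<or> R x y)"

definition Vi :: "'w \<Rightarrow> 'a \<Rightarrow> bool" where
  "Vi x p \<longleftrightarrow> ev x (MBox (MVar p))"

lemma le_trans: "le T x y \<Longrightarrow> le T y z \<Longrightarrow> le T x z"
  unfolding le_def using tr by blast

lemma le_refl: "le T x y \<Longrightarrow> le T y y"
  unfolding le_def by blast

lemma Vi_persist: "le T x y \<Longrightarrow> Vi x p \<Longrightarrow> Vi y p"
  unfolding le_def Vi_def using tr by auto

lemma neg_persist: "R x y \<Longrightarrow> ev x (G (neg n B)) \<Longrightarrow> ev y (G (neg n B))"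
proof (induction B)
  case (Atom p) then show ?case using tr by (simp; (blast)?)
next
  case (FImp A B) then show ?case using tr by (simp; (blast)?)
qed auto

lemma pos_boxed: "n \<ge> 1 \<Longrightarrow> \<exists>\<psi>. G (pos n B) = MBox \<psi>"
  by (cases n) (auto simp: pos_pinner G_topimp)

lemma Phi_persist: assumes "n \<ge> 1" shows "R x y \<Longrightarrow> ev x (G (pinner n B)) \<Longrightarrow> ev y (G (pinner n B))"
proof (cases B)
  case (FAnd A C)
  obtain a c where "G (pos n A) = MBox a" "G (pos n C) = MBox c" using pos_boxed[OF assms] by metis
  then show "R x y \<Longrightarrow> ev x (G (pinner n B)) \<Longrightarrow> ev y (G (pinner n B))" using FAnd tr by (simp; (blast)?)
next
  case (FOr A C)
  obtain a c where "G (pos n A) = MBox a" "G (pos n C) = MBox c" using pos_boxed[OF assms] by metis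
  then show "R x y \<Longrightarrow> ev x (G (pinner n B)) \<Longrightarrow> ev y (G (pinner n B))" using FOr tr by (simp; (blast)?)
next
  case (FImp A C)
  then show "R x y \<Longrightarrow> ev x (G (pinner n B)) \<Longrightarrow> ev y (G (pinner n B))" using tr by (simp; (blast)?)
qed (use tr in \<open>simp; (blast)?\<close>)+

lemma Phi_pos: assumes "n \<ge> 1" "ev x (G (pinner n B))" shows "ev x (G (pos n B))"
proof -
  obtain k where k: "n = Suc k" using assms(1) by (cases n) auto
  have "\<forall>y. R x y \<longrightarrow> ev y (G (pinner n B))" using Phi_persist[OF assms(1)] assms(2) by blast
  then have "ev x (boxes (Suc k) (G (pinner n B)))" by (rule allsucc_boxes)
  then show ?thesis by (simp add: pos_pinner G_topimp k)
qed

lemma neg_det: "\<forall>\<phi>\<in>ncomps n B. ev x \<phi> \<longleftrightarrow> ev u \<phi> \<Longrightarrow> ev x (G (neg n B)) \<longleftrightarrow> ev u (G (neg n B))"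
proof (induction B)
  case (FImp A B) then show ?case by (simp only: ncomps.simps) blast
qed auto

lemma claim:
  assumes fin: "finite T" and bx: "\<forall>\<phi>\<in>T. \<exists>\<psi>. \<phi> = MBox \<psi>" and cn: "card T < n"
  shows "Tset n B \<subseteq> T \<Longrightarrow>
    (\<forall>y. loop T y \<longrightarrow> ev y (G (neg n B)) \<longrightarrow> frc (le T) Vi y B) \<and>
    (\<forall>y. loop T y \<longrightarrow> frc (le T) Vi y B \<longrightarrow> ev y (G (pinner n B)))"
proof -
  have n1: "n \<ge> 1" using cn by simp
  show "Tset n B \<subseteq> T \<Longrightarrow>
    (\<forall>y. loop T y \<longrightarrow> ev y (G (neg n B)) \<longrightarrow> frc (le T) Vi y B) \<and>
    (\<forall>y. loop T y \<longrightarrow> frc (le T) Vi y B \<longrightarrow> ev y (G (pinner n B)))"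
  proof (induction B)
    case (Atom p) then show ?case by (simp add: Vi_def)
  next
    case FBot then show ?case by simp
  next
    case (FAnd B C)
    have TB: "Tset n B \<subseteq> T" and TC: "Tset n C \<subseteq> T" using FAnd.prems by auto
    have ihB1: "\<And>y. loop T y \<Longrightarrow> ev y (G (neg n B)) \<Longrightarrow> frc (le T) Vi y B"
      and ihB2: "\<And>y. loop T y \<Longrightarrow> frc (le T) Vi y B \<Longrightarrow> ev y (G (pinner n B))"
      using FAnd.IH(1)[OF TB] by auto
    have ihC1: "\<And>y. loop T y \<Longrightarrow> ev y (G (neg n C)) \<Longrightarrow> frc (le T) Vi y C"
      and ihC2: "\<And>y. loop T y \<Longrightarrow> frc (le T) Vi y C \<Longrightarrow> ev y (G (pinner n C))"
      using FAnd.IH(2)[OF TC] by auto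
    show ?case
    proof (intro conjI allI impI)
      fix y assume "loop T y" "ev y (G (neg n (FAnd B C)))"
      then show "frc (le T) Vi y (FAnd B C)" using ihB1 ihC1 by simp
    next
      fix y assume a: "loop T y" "frc (le T) Vi y (FAnd B C)"
      then have "ev y (G (pos n B))" "ev y (G (pos n C))" using ihB2 ihC2 Phi_pos[OF n1] by auto
      then show "ev y (G (pinner n (FAnd B C)))" by simp
    qed
  next
    case (FOr B C)
    have TB: "Tset n B \<subseteq> T" and TC: "Tset n C \<subseteq> T" using FOr.prems by auto
    have ihB1: "\<And>y. loop T y \<Longrightarrow> ev y (G (neg n B)) \<Longrightarrow> frc (le T) Vi y B"
      and ihB2: "\<And>y. loop T y \<Longrightarrow> frc (le T) Vi y B \<Longrightarrow> ev y (G (pinner n B))"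
      using FOr.IH(1)[OF TB] by auto
    have ihC1: "\<And>y. loop T y \<Longrightarrow> ev y (G (neg n C)) \<Longrightarrow> frc (le T) Vi y C"
      and ihC2: "\<And>y. loop T y \<Longrightarrow> frc (le T) Vi y C \<Longrightarrow> ev y (G (pinner n C))"
      using FOr.IH(2)[OF TC] by auto
    show ?case
    proof (intro conjI allI impI)
      fix y assume "loop T y" "ev y (G (neg n (FOr B C)))"
      then show "frc (le T) Vi y (FOr B C)" using ihB1 ihC1 by auto
    next
      fix y assume a: "loop T y" "frc (le T) Vi y (FOr B C)"
      then have "ev y (G (pos n B)) \<or> ev y (G (pos n C))" using ihB2 ihC2 Phi_pos[OF n1] by auto
      then show "ev y (G (pinner n (FOr B C)))" by simp
    qed
  next
    case (FImp B C)
    have TB: "Tset n B \<subseteq> T" and TC: "Tset n C \<subseteq> T" using FImp.prems by auto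
    have ihB1: "\<And>y. loop T y \<Longrightarrow> ev y (G (neg n B)) \<Longrightarrow> frc (le T) Vi y B"
      and ihB2: "\<And>y. loop T y \<Longrightarrow> frc (le T) Vi y B \<Longrightarrow> ev y (G (pinner n B))"
      using FImp.IH(1)[OF TB] by auto
    have ihC1: "\<And>y. loop T y \<Longrightarrow> ev y (G (neg n C)) \<Longrightarrow> frc (le T) Vi y C"
      and ihC2: "\<And>y. loop T y \<Longrightarrow> frc (le T) Vi y C \<Longrightarrow> ev y (G (pinner n C))"
      using FImp.IH(2)[OF TC] by auto
    have part1: "frc (le T) Vi y (FImp B C)" if ly: "loop T y" and ey: "ev y (G (neg n (FImp B C)))" for y
    proof -
      have box: "\<forall>z. R y z \<longrightarrow> ev z (G (pos n B)) \<longrightarrow> ev z (G (neg n C))" using ey by simp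
      obtain u where u: "R y u" "tyP T u = tyP T y" using ly unfolding loop_def by blast
      have self: "ev y (G (pos n B)) \<longrightarrow> ev y (G (neg n C))"
      proof
        assume "ev y (G (pos n B))"
        moreover obtain \<psi> where "G (pos n B) = MBox \<psi>" using pos_boxed[OF n1] by blast
        ultimately have "ev u (G (pos n B))" using box_persist[OF u(1)] by simp
        then have eu: "ev u (G (neg n C))" using box u(1) by blast
        have "\<forall>\<phi>\<in>ncomps n C. ev y \<phi> \<longleftrightarrow> ev u \<phi>"
        proof
          fix \<phi> assume "\<phi> \<in> ncomps n C"
          then have "\<phi> \<in> T" using ncomps_Tset TC by blast
          then show "ev y \<phi> \<longleftrightarrow> ev u \<phi>" using u(2) unfolding tyP_def by blast
        qed
        then show "ev y (G (neg n C))" using neg_det eu by blast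
      qed
      show ?thesis
      proof (simp only: frc.simps, intro allI impI)
        fix v assume lv: "le T y v" and fv: "frc (le T) Vi v B"
        have loopv: "loop T v" using lv unfolding le_def by blast
        have "ev v (G (pos n B)) \<longrightarrow> ev v (G (neg n C))" using lv self box unfolding le_def by blast
        moreover have "ev v (G (pos n B))" using Phi_pos[OF n1 ihB2[OF loopv fv]] .
        ultimately show "frc (le T) Vi v C" using ihC1[OF loopv] by blast
      qed
    qed
    have part2: "ev y (G (pinner n (FImp B C)))" if ly: "loop T y" and fy: "frc (le T) Vi y (FImp B C)" for y
    proof -
      have "ev z (G (pos n C))" if yz: "R y z" and nz: "ev z (G (neg n B))" for z
      proof -
        have "ev z (boxes n (G (pinner n C)))"
        proof (rule chain[OF fin bx])
          have "card (T - tyP T z) \<le> card T" using fin by (simp add: card_mono)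
          then show "card (T - tyP T z) < n" using cn by simp
        next
          show "\<forall>v. (v = z \<or> R z v) \<longrightarrow> loop T v \<longrightarrow> (\<forall>v'. R v v' \<longrightarrow> ev v' (G (pinner n C)))"
          proof (intro allI impI)
            fix v v' assume zv: "v = z \<or> R z v" and lv: "loop T v" and vv: "R v v'"
            have yv: "R y v" using zv yz tr by blast
            have "ev v (G (neg n B))" using zv nz neg_persist by blast
            then have "frc (le T) Vi v B" using ihB1[OF lv] by blast
            moreover have "le T y v" using lv yv unfolding le_def by blast
            ultimately have "frc (le T) Vi v C" using fy by simp
            then have "ev v (G (pinner n C))" using ihC2[OF lv] by blast
            then show "ev v' (G (pinner n C))" using Phi_persist[OF n1] vv by blast
          qed
        qed
        then show ?thesis by (simp add: pos_pinner G_topimp)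
      qed
      then show ?thesis by simp
    qed
    show ?case using part1 part2 by blast
  qed
qed

lemma forward_sem:
  assumes "IPC A"
  shows "ev x (G (Tr A))"
proof -
  let ?n = "w A" and ?T = "Tset (w A) A"
  have fin: "finite ?T" by (rule finite_Tset)
  have bx: "\<forall>\<phi>\<in>?T. \<exists>\<psi>. \<phi> = MBox \<psi>" using Tset_boxed by blast
  have cn: "card ?T < ?n" using card_Tset[of "w A" A] gc_lt_w[of A] by simp
  have cl: "\<forall>y. loop ?T y \<longrightarrow> frc (le ?T) Vi y A \<longrightarrow> ev y (G (pinner ?n A))"
    using claim[OF fin bx cn] by blast
  have "ev x (boxes ?n (G (pinner ?n A)))"
  proof (rule chain[OF fin bx])
    have "card (?T - tyP ?T x) \<le> card ?T" using fin by (simp add: card_mono)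
    then show "card (?T - tyP ?T x) < ?n" using cn by simp
  next
    show "\<forall>v. (v = x \<or> R x v) \<longrightarrow> loop ?T v \<longrightarrow> (\<forall>v'. R v v' \<longrightarrow> ev v' (G (pinner ?n A)))"
    proof (intro allI impI)
      fix v v' assume lv: "loop ?T v" and vv: "R v v'"
      have "le ?T v v" using lv unfolding le_def by blast
      have h1: "\<forall>x y z. le ?T x y \<longrightarrow> le ?T y z \<longrightarrow> le ?T x z" using le_trans by blast
      have h2: "\<forall>x y. le ?T x y \<longrightarrow> le ?T y y" using le_refl by blast
      have h3: "\<forall>x y p. le ?T x y \<longrightarrow> Vi x p \<longrightarrow> Vi y p" using Vi_persist by blast
      have "frc (le ?T) Vi v A"
        using frc_sound[OF h1 h2 h3 assms] \<open>le ?T v v\<close> by blast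
      then have "ev v (G (pinner ?n A))" using cl lv by blast
      then show "ev v' (G (pinner ?n A))" using Phi_persist[of ?n] vv w_ge2[of A] by auto
    qed
  qed
  then show ?thesis by (simp add: Tr_def pos_pinner G_topimp)
qed

end

theorem mainTheorem14:
  fixes A :: "'a fm"
  shows "IPC A \<longleftrightarrow> K4 (G (Tr A))"
proof
  assume a: "IPC A"
  show "K4 (G (Tr A))"
  proof (rule K4_complete)
    fix R :: "'a mfm set \<Rightarrow> 'a mfm set \<Rightarrow> bool" and V :: "'a mfm set \<Rightarrow> 'a \<Rightarrow> bool" and x
    assume "transR R"
    then interpret tm R V by unfold_locales (auto simp: transR_def)
    show "meval R V x (G (Tr A))" using forward_sem[OF a] .
  qed
next
  assume "K4 (G (Tr A))"
  then show "IPC A" by (rule back_dir)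
qed

end
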